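(* Let $(\Omega,\Sigma,\mu)$ be a $\sigma$-finite atomless measure space and let $0<\alpha\le\infty$. Suppose that $u,v\in L_0(\mu)$ with $u,v\ge 0$ and $u\wedge v=0$ (i.e. $\min(u,v)=0$ a.e.), and suppose $f\in L_0(0,\infty)$, $f\ge 0$, is such that $$\int_0^t u^*(s)\,ds\le\int_0^t f^*(s)\,ds,\qquad \int_0^t v^*(s)\,ds\le\int_0^t f^*(s)\,ds,\qquad 0\le t<\alpha .$$ Then $$\int_0^t (u+v)^*(s)\,ds\le \int_0^t (D_2f^* )(s)\,ds,\qquad 0\le t<\alpha,$$ where $(D_2 g)(t)=g(t/2)$ for $t\ge 0$.
   Context: $L_0(\mu)$ denotes the space of (classes of) $\mu$-measurable real functions. For $f\in L_0(\mu)$, the distribution function is $d_{|f|}(s)=\mu(\{x:|f(x)|>s\})$, $s\ge0$, and the decreasing rearrangement is $f^*(t)=\inf\{s\ge 0: d_{|f|}(s)\le t\}$, $t\ge 0$. The space $(0,\infty)$ carries Lebesgue measure. *)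

theory Defs
  imports "HOL-Analysis.Analysis"
begin

definition distrib_fun :: "'a measure \<Rightarrow> ('a \<Rightarrow> real) \<Rightarrow> real \<Rightarrow> ennreal" where
  "distrib_fun M f s = emeasure M {x \<in> space M. \<bar>f x\<bar> > s}"

(* Decreasing rearrangement f^*(t) = inf {s >= 0. d_{|f|}(s) <= t}, values in [0,\<infinity>]
   (the infimum of the empty set is \<infinity>) *)
definition decr_rearr :: "'a measure \<Rightarrow> ('a \<Rightarrow> real) \<Rightarrow> real \<Rightarrow> ennreal" where
  "decr_rearr M f t = Inf (ennreal ` {s. 0 \<le> s \<and> distrib_fun M f s \<le> ennreal t})"

definition atomless :: "'a measure \<Rightarrow> bool" where
  "atomless M \<longleftrightarrow> (\<forall>A\<in>sets M. 0 < emeasure M A \<longrightarrow>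
      (\<exists>B\<in>sets M. B \<subseteq> A \<and> 0 < emeasure M B \<and> emeasure M B < emeasure M A))"

definition halfline :: "real measure" where
  "halfline = restrict_space lebesgue {0<..}"

end

theory Submission
  imports Defs
begin

lemma antimono_measurable:
  fixes g :: "real \<Rightarrow> ennreal"
  assumes "antimono g"
  shows "g \<in> borel_measurable borel"
proof (rule borel_measurableI_greater)
  fix y
  have "is_interval {x. y < g x}"
    unfolding is_interval_1
  proof (safe)
    fix a b x assume "y < g a" "y < g b" "a \<le> x" "x \<le> b"
    then show "y < g x" using assms[THEN antimonoD, of x b] by auto
  qed
  then show "{x \<in> space borel. y < g x} \<in> sets borel"
    using real_interval_borel_measurable by simp
qed

lemma distrib_antimono:
  assumes "w \<in> borel_measurable M"
  shows "antimono (distrib_fun M w)"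
  unfolding distrib_fun_def
proof (intro antimonoI emeasure_mono)
  fix x y :: real
  show "{xa \<in> space M. x < \<bar>w xa\<bar>} \<in> sets M" using assms by measurable
qed auto

lemma distrib_rcont:
  assumes "w \<in> borel_measurable M"
  shows "distrib_fun M w x = (SUP n. distrib_fun M w (x + 1 / Suc n))"
proof -
  let ?A = "\<lambda>n. {y \<in> space M. x + 1 / Suc n < \<bar>w y\<bar>}"
  have inc: "incseq ?A"
  proof (rule incseq_SucI, safe)
    fix n y assume "x + 1 / Suc n < \<bar>w y\<bar>"
    moreover have "1 / real (Suc (Suc n)) \<le> 1 / Suc n" by (simp add: frac_le)
    ultimately show "x + 1 / Suc (Suc n) < \<bar>w y\<bar>" by linarith
  qed
  have "(\<Union>n. ?A n) = {y \<in> space M. x < \<bar>w y\<bar>}"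
  proof safe
    fix y assume "y \<in> space M" "x < \<bar>w y\<bar>"
    then obtain n where "1 / Suc n < \<bar>w y\<bar> - x"
      using reals_Archimedean[of "\<bar>w y\<bar> - x"] by (auto simp: inverse_eq_divide)
    then have "x + 1 / Suc n < \<bar>w y\<bar>" by linarith
    then show "y \<in> (\<Union>n. ?A n)" using \<open>y \<in> space M\<close> by blast
  next
    fix y n assume "x + 1 / Suc n < \<bar>w y\<bar>"
    moreover have "0 < 1 / real (Suc n)" by simp
    ultimately show "x < \<bar>w y\<bar>" by linarith
  qed
  moreover have "range ?A \<subseteq> sets M" using assms by auto
  ultimately show ?thesis
    unfolding distrib_fun_def using SUP_emeasure_incseq[OF _ inc] by simp
qed

lemma decr_iff:
  assumes "w \<in> borel_measurable M" "0 \<le> l"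
  shows "ennreal l < decr_rearr M w s \<longleftrightarrow> ennreal s < distrib_fun M w l"
proof
  assume "ennreal s < distrib_fun M w l"
  show "ennreal l < decr_rearr M w s"
  proof (rule ccontr)
    assume "\<not> ennreal l < decr_rearr M w s"
    then have le: "decr_rearr M w s \<le> ennreal l" by simp
    have "distrib_fun M w (l + 1 / Suc n) \<le> ennreal s" for n
    proof -
      have "Inf (ennreal ` {r. 0 \<le> r \<and> distrib_fun M w r \<le> ennreal s}) < ennreal (l + 1 / Suc n)"
        using le unfolding decr_rearr_def
        by (rule le_less_trans) (simp add: ennreal_less_iff assms)
      then obtain r where r: "0 \<le> r" "distrib_fun M w r \<le> ennreal s" "ennreal r < ennreal (l + 1 / Suc n)"
        by (auto simp: Inf_less_iff)
      then have "r \<le> l + 1 / Suc n" using ennreal_less_iff[OF r(1)] by auto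
      then have "distrib_fun M w (l + 1 / Suc n) \<le> distrib_fun M w r"
        using distrib_antimono[OF assms(1), THEN antimonoD] by blast
      then show ?thesis using r(2) by simp
    qed
    then have "distrib_fun M w l \<le> ennreal s"
      by (subst distrib_rcont[OF assms(1)]) (auto intro: SUP_least)
    then show False using \<open>ennreal s < distrib_fun M w l\<close> by simp
  qed
next
  assume "ennreal l < decr_rearr M w s"
  show "ennreal s < distrib_fun M w l"
  proof (rule ccontr)
    assume "\<not> ennreal s < distrib_fun M w l"
    then have "l \<in> {r. 0 \<le> r \<and> distrib_fun M w r \<le> ennreal s}" using assms by auto
    then have "decr_rearr M w s \<le> ennreal l" unfolding decr_rearr_def by (auto intro: Inf_lower)
    then show False using \<open>ennreal l < decr_rearr M w s\<close> by simp
  qed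
qed

lemma emeasure_Ici_top: "emeasure lborel {0::real..} = \<infinity>"
proof -
  have "ennreal (real n) \<le> emeasure lborel {0::real..}" for n
  proof -
    have "ennreal (real n) = emeasure lborel {0::real..real n}" by simp
    also have "\<dots> \<le> emeasure lborel {0::real..}" by (intro emeasure_mono) auto
    finally show ?thesis .
  qed
  then have "(SUP n. of_nat n :: ennreal) \<le> emeasure lborel {0::real..}"
    by (intro SUP_least) (simp add: ennreal_of_nat_eq_real_of_nat)
  then show ?thesis
    by (simp add: ennreal_SUP_of_nat_eq_top top.extremum_uniqueI)
qed

lemma lc1: "x = emeasure lborel {l::real. 0 \<le> l \<and> ennreal l < x}"
proof (cases x rule: ennreal_cases)
  case (real r)
  then have "{l::real. 0 \<le> l \<and> ennreal l < x} = {0..<r}" by (auto simp: ennreal_less_iff)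
  then show ?thesis using real by simp
next
  case top
  then have "{l::real. 0 \<le> l \<and> ennreal l < x} = {0..}" by auto
  then show ?thesis using top emeasure_Ici_top by simp
qed

lemma lc2:
  assumes "0 \<le> t"
  shows "emeasure lborel {s::real. 0 \<le> s \<and> s \<le> t \<and> ennreal s < X} = min (ennreal t) X"
proof (cases X rule: ennreal_cases)
  case (real r)
  show ?thesis
  proof (cases "r \<le> t")
    case True
    then have "{s::real. 0 \<le> s \<and> s \<le> t \<and> ennreal s < X} = {0..<r}" using real by (auto simp: ennreal_less_iff)
    then show ?thesis using real True by (simp add: min_ennreal assms)
  next
    case False
    then have "{s::real. 0 \<le> s \<and> s \<le> t \<and> ennreal s < X} = {0..t}" using real by (auto simp: ennreal_less_iff)
    then show ?thesis using real False by (simp add: min_ennreal assms)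
  qed
next
  case top
  then have "{s::real. 0 \<le> s \<and> s \<le> t \<and> ennreal s < X} = {0..t}" by auto
  then show ?thesis using top assms by simp
qed

lemma layer_cake:
  fixes g h :: "real \<Rightarrow> ennreal" and t :: real
  assumes t: "0 \<le> t" and g[measurable]: "g \<in> borel_measurable borel"
    and iff: "\<And>s l. 0 \<le> s \<Longrightarrow> s \<le> t \<Longrightarrow> 0 \<le> l \<Longrightarrow> (ennreal l < h s \<longleftrightarrow> ennreal s < g l)"
  shows "(\<integral>\<^sup>+ s\<in>{0..t}. h s \<partial>lborel) = (\<integral>\<^sup>+ l\<in>{0..}. min (ennreal t) (g l) \<partial>lborel)"
proof -
  define k :: "real \<Rightarrow> real \<Rightarrow> ennreal" where "k s l = indicator {p. 0 \<le> fst p \<and> fst p \<le> t \<and> 0 \<le> snd p \<and> ennreal (fst p) < g (snd p)} (s, l)" for s l :: real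
  have km: "case_prod k \<in> borel_measurable (lborel \<Otimes>\<^sub>M lborel)"
    unfolding k_def by measurable
  have 1: "h s * indicator {0..t} s = (\<integral>\<^sup>+ l. k s l \<partial>lborel)" for s
  proof (cases "0 \<le> s \<and> s \<le> t")
    case True
    have "(\<integral>\<^sup>+ l. k s l \<partial>lborel) = (\<integral>\<^sup>+ l. indicator {l. 0 \<le> l \<and> ennreal l < h s} l \<partial>lborel)"
      using True iff by (intro nn_integral_cong) (auto simp: k_def split: split_indicator)
    also have "\<dots> = emeasure lborel {l. 0 \<le> l \<and> ennreal l < h s}"
      by (intro nn_integral_indicator) measurable
    also have "\<dots> = h s" using lc1 by simp
    finally show ?thesis using True by simp
  next
    case False
    then show ?thesis by (auto simp: k_def)
  qed
  have 2: "min (ennreal t) (g l) * indicator {0..} l = (\<integral>\<^sup>+ s. k s l \<partial>lborel)" for l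
  proof (cases "0 \<le> l")
    case True
    have "(\<integral>\<^sup>+ s. k s l \<partial>lborel) = (\<integral>\<^sup>+ s. indicator {s. 0 \<le> s \<and> s \<le> t \<and> ennreal s < g l} s \<partial>lborel)"
      using True by (intro nn_integral_cong) (auto simp: k_def split: split_indicator)
    also have "\<dots> = emeasure lborel {s. 0 \<le> s \<and> s \<le> t \<and> ennreal s < g l}"
      by (intro nn_integral_indicator) measurable
    also have "\<dots> = min (ennreal t) (g l)" using lc2 t by simp
    finally show ?thesis using True by simp
  next
    case False
    then show ?thesis by (auto simp: k_def)
  qed
  have "(\<integral>\<^sup>+ s\<in>{0..t}. h s \<partial>lborel) = (\<integral>\<^sup>+ s. \<integral>\<^sup>+ l. k s l \<partial>lborel \<partial>lborel)"
    using 1 by simp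
  also have "\<dots> = (\<integral>\<^sup>+ l. \<integral>\<^sup>+ s. k s l \<partial>lborel \<partial>lborel)"
    using lborel_pair.Fubini'[OF km] by simp
  also have "\<dots> = (\<integral>\<^sup>+ l\<in>{0..}. min (ennreal t) (g l) \<partial>lborel)"
    using 2 by simp
  finally show ?thesis .
qed

lemma choose_ab:
  fixes Du Dv :: "real \<Rightarrow> ennreal" and t :: real
  assumes t: "0 \<le> t" and mu: "antimono Du" and mv: "antimono Dv"
    and ru: "\<And>x. 0 \<le> x \<Longrightarrow> Du x = (SUP n. Du (x + 1 / Suc n))"
    and rv: "\<And>x. 0 \<le> x \<Longrightarrow> Dv x = (SUP n. Dv (x + 1 / Suc n))"
  shows "\<exists>a b. 0 \<le> a \<and> 0 \<le> b \<and> a + b = t \<and>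
    (\<forall>l\<ge>0. min (ennreal t) (Du l + Dv l) \<le> min (ennreal a) (Du l) + min (ennreal b) (Dv l))"
proof -
  define L where "L = {l. 0 \<le> l \<and> Du l + Dv l \<le> ennreal t}"
  have up: "y \<in> L" if "x \<in> L" "x \<le> y" for x y
  proof -
    have "Du y + Dv y \<le> Du x + Dv x"
      using mu[THEN antimonoD, OF that(2)] mv[THEN antimonoD, OF that(2)] by (rule add_mono)
    then show ?thesis using that by (auto simp: L_def)
  qed
  define A where "A = (INF l\<in>{0..}-L. Du l)"
  define B where "B = (INF l\<in>{0..}-L. Dv l)"
  have AB: "ennreal t \<le> A + B"
  proof (rule ccontr)
    assume "\<not> ennreal t \<le> A + B"
    then have lt: "A + B < ennreal t" by simp
    have "A \<le> A + B" "B \<le> A + B" by (simp_all add: add_increasing2 add_increasing)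
    then have "A < top" "B < top" using lt ennreal_less_top[of t] by (meson le_less_trans less_trans)+
    then obtain a0 b0 where a0: "A = ennreal a0" "0 \<le> a0" and b0: "B = ennreal b0" "0 \<le> b0"
      by (metis ennreal_cases less_irrefl)
    have "a0 + b0 < t" using lt a0 b0 by (simp add: ennreal_plus_if ennreal_less_iff del: ennreal_plus)
    define d where "d = (t - a0 - b0) / 2"
    have d: "0 < d" using \<open>a0 + b0 < t\<close> by (simp add: d_def)
    have "A < ennreal (a0 + d)" using a0 d by (simp add: ennreal_less_iff)
    then obtain l1 where l1: "l1 \<in> {0..} - L" "Du l1 < ennreal (a0 + d)"
      unfolding A_def by (auto simp: INF_less_iff)
    have "B < ennreal (b0 + d)" using b0 d by (simp add: ennreal_less_iff)
    then obtain l2 where l2: "l2 \<in> {0..} - L" "Dv l2 < ennreal (b0 + d)"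
      unfolding B_def by (auto simp: INF_less_iff)
    define l3 where "l3 = max l1 l2"
    have l3: "l3 \<in> {0..} - L" using l1 l2 by (auto simp: l3_def max_def)
    have "Du l3 \<le> Du l1" "Dv l3 \<le> Dv l2"
      using mu[THEN antimonoD, of l1 l3] mv[THEN antimonoD, of l2 l3] by (auto simp: l3_def)
    then have "Du l3 + Dv l3 < ennreal (a0 + d) + ennreal (b0 + d)"
      using l1 l2 by (meson add_strict_mono le_less_trans)
    also have "\<dots> = ennreal t" using a0 b0 d by (simp add: ennreal_plus[symmetric] d_def del: ennreal_plus)
    finally have "l3 \<in> L" using l3 by (auto simp: L_def)
    then show False using l3 by simp
  qed
  have "\<exists>p q. p + q \<le> ennreal t \<and> p \<le> A \<and> q \<le> B \<and> (\<forall>l\<in>L. Du l \<le> p \<and> Dv l \<le> q)"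
  proof (cases "L = {}")
    case True
    then show ?thesis by (intro exI[of _ 0]) auto
  next
    case False
    define l0 where "l0 = Inf L"
    have bdd: "bdd_below L" by (auto simp: L_def bdd_below_def)
    have l0ge: "0 \<le> l0" unfolding l0_def using False by (intro cInf_greatest) (auto simp: L_def)
    have l0n: "l0 + 1 / Suc n \<in> L" for n
    proof -
      have "l0 < l0 + 1 / Suc n" by simp
      then obtain x where "x \<in> L" "x < l0 + 1 / Suc n"
        using cInf_less_iff[OF False bdd] unfolding l0_def by blast
      then show ?thesis using up by auto
    qed
    have incu: "incseq (\<lambda>n. Du (l0 + 1 / Suc n))"
      by (intro incseq_SucI mu[THEN antimonoD]) (simp add: frac_le)
    have incv: "incseq (\<lambda>n. Dv (l0 + 1 / Suc n))"
      by (intro incseq_SucI mv[THEN antimonoD]) (simp add: frac_le)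
    have "Du l0 + Dv l0 = (SUP n. Du (l0 + 1 / Suc n) + Dv (l0 + 1 / Suc n))"
      using ru[OF l0ge] rv[OF l0ge] ennreal_SUP_add[OF incu incv] by simp
    also have "\<dots> \<le> ennreal t"
      using l0n by (intro SUP_least) (auto simp: L_def)
    finally have sum: "Du l0 + Dv l0 \<le> ennreal t" .
    have l0L: "l0 \<in> L" using sum l0ge by (simp add: L_def)
    have below: "l < l0" if "l \<in> {0..} - L" for l
      using that up[OF l0L, of l] by (auto simp: not_less[symmetric])
    show ?thesis
    proof (intro exI conjI ballI)
      show "Du l0 + Dv l0 \<le> ennreal t" by (rule sum)
      show "Du l0 \<le> A" unfolding A_def
        using below by (intro INF_greatest mu[THEN antimonoD]) (auto intro: less_imp_le)
      show "Dv l0 \<le> B" unfolding B_def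
        using below by (intro INF_greatest mv[THEN antimonoD]) (auto intro: less_imp_le)
      fix l assume "l \<in> L"
      then have "l0 \<le> l" unfolding l0_def using bdd by (rule cInf_lower)
      then show "Du l \<le> Du l0" "Dv l \<le> Dv l0"
        using mu[THEN antimonoD] mv[THEN antimonoD] by auto
    qed
  qed
  then obtain p q where pq: "p + q \<le> ennreal t" "p \<le> A" "q \<le> B" "\<And>l. l \<in> L \<Longrightarrow> Du l \<le> p \<and> Dv l \<le> q"
    by blast
  have "p \<le> p + q" "q \<le> p + q" by (simp_all add: add_increasing2 add_increasing)
  then have "p < top" "q < top" using pq(1) ennreal_less_top[of t] by (meson le_less_trans order_trans)+
  then obtain p' q' where p': "p = ennreal p'" "0 \<le> p'" and q': "q = ennreal q'" "0 \<le> q'"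
    by (metis ennreal_cases less_irrefl)
  have pqt: "p' + q' \<le> t" using pq(1) p' q' t
    by (simp add: ennreal_plus_if ennreal_less_iff del: ennreal_plus)
  have "\<exists>a. p' \<le> a \<and> ennreal a \<le> A \<and> q' \<le> t - a \<and> ennreal (t - a) \<le> B"
  proof (cases A rule: ennreal_cases)
    case top
    then show ?thesis using pqt q' pq(3) by (intro exI[of _ "t - q'"]) auto
  next
    case (real A')
    have pA: "p' \<le> A'" using pq(2) real p' by (simp add: ennreal_le_iff)
    show ?thesis
    proof (cases "A' \<le> t - q'")
      case True
      have "ennreal (t - A') \<le> B"
      proof (cases B rule: ennreal_cases)
        case (real B')
        then have "t \<le> A' + B'" using AB \<open>A = ennreal A'\<close> \<open>0 \<le> A'\<close>
          by (simp add: ennreal_plus_if ennreal_less_iff del: ennreal_plus)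
        then show ?thesis using real by (simp add: ennreal_le_iff ennreal_leI)
      qed simp
      then show ?thesis using True pA real by (intro exI[of _ A']) auto
    next
      case False
      then show ?thesis using pA real pqt q' pq(3) by (intro exI[of _ "t - q'"]) (auto intro: ennreal_leI)
    qed
  qed
  then obtain a where a: "p' \<le> a" "ennreal a \<le> A" "q' \<le> t - a" "ennreal (t - a) \<le> B" by blast
  show ?thesis
  proof (intro exI conjI allI impI)
    show "0 \<le> a" using a p' by simp
    show "0 \<le> t - a" using a q' by simp
    show "a + (t - a) = t" by simp
    fix l :: real assume l: "0 \<le> l"
    show "min (ennreal t) (Du l + Dv l) \<le> min (ennreal a) (Du l) + min (ennreal (t - a)) (Dv l)"
    proof (cases "l \<in> L")
      case True
      then have "Du l \<le> ennreal a" "Dv l \<le> ennreal (t - a)"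
        using pq(4)[OF True] a p' q' by (auto intro: order_trans ennreal_leI)
      then show ?thesis by simp
    next
      case False
      then have "A \<le> Du l" "B \<le> Dv l" using l unfolding A_def B_def by (auto intro: INF_lower)
      then have "ennreal a \<le> Du l" "ennreal (t - a) \<le> Dv l" using a by auto
      then have "min (ennreal a) (Du l) + min (ennreal (t - a)) (Dv l) = ennreal t"
        using a p' q' by (simp add: ennreal_plus_if ennreal_less_iff del: ennreal_plus)
      then show ?thesis by simp
    qed
  qed
qed

lemma distrib_add:
  assumes [measurable]: "u \<in> borel_measurable M" "v \<in> borel_measurable M"
    and "AE x in M. 0 \<le> u x" "AE x in M. 0 \<le> v x" "AE x in M. min (u x) (v x) = 0"
    and l: "0 \<le> l"
  shows "distrib_fun M (\<lambda>x. u x + v x) l = distrib_fun M u l + distrib_fun M v l"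
proof -
  have eq: "distrib_fun M w l = (\<integral>\<^sup>+x. indicator {x\<in>space M. l < \<bar>w x\<bar>} x \<partial>M)"
    if [measurable]: "w \<in> borel_measurable M" for w
    unfolding distrib_fun_def by (rule nn_integral_indicator[symmetric]) measurable
  have "AE x in M. indicator {x\<in>space M. l < \<bar>u x + v x\<bar>} x
      = (indicator {x\<in>space M. l < \<bar>u x\<bar>} x + indicator {x\<in>space M. l < \<bar>v x\<bar>} x :: ennreal)"
    using assms(3-5)
  proof eventually_elim
    case (elim x)
    then show ?case using l by (cases "u x = 0") (auto split: split_indicator simp: min_def split: if_splits)
  qed
  then have "(\<integral>\<^sup>+x. indicator {x\<in>space M. l < \<bar>u x + v x\<bar>} x \<partial>M) = (\<integral>\<^sup>+x. indicator {x\<in>space M. l < \<bar>u x\<bar>} x + indicator {x\<in>space M. l < \<bar>v x\<bar>} x \<partial>M)"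
    by (rule nn_integral_cong_AE)
  moreover have "distrib_fun M (\<lambda>x. u x + v x) l = (\<integral>\<^sup>+x. indicator {x\<in>space M. l < \<bar>u x + v x\<bar>} x \<partial>M)"
    by (rule eq) measurable
  ultimately have "distrib_fun M (\<lambda>x. u x + v x) l = (\<integral>\<^sup>+x. indicator {x\<in>space M. l < \<bar>u x\<bar>} x + indicator {x\<in>space M. l < \<bar>v x\<bar>} x \<partial>M)"
    by simp
  also have "\<dots> = distrib_fun M u l + distrib_fun M v l"
    by (subst nn_integral_add) (auto simp: eq)
  finally show ?thesis .
qed

lemma half_iff:
  fixes X :: ennreal assumes "0 \<le> s"
  shows "ennreal (s / 2) < X \<longleftrightarrow> ennreal s < 2 * X"
proof (cases X rule: ennreal_cases)
  case (real r)
  then have "2 * X = ennreal (2 * r)" by (simp add: ennreal_mult)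
  then show ?thesis using real assms by (simp add: ennreal_less_iff mult.commute)
qed simp

lemma min_concave:
  fixes x :: ennreal assumes "0 \<le> a" "0 \<le> b"
  shows "min (ennreal a) x + min (ennreal b) x \<le> min (ennreal (a + b)) (2 * x)"
proof -
  have "min (ennreal a) x + min (ennreal b) x \<le> ennreal (a + b)"
    using assms by (simp add: add_mono)
  moreover have "min (ennreal a) x + min (ennreal b) x \<le> 2 * x"
    by (metis add_mono min.cobounded2 mult_2)
  ultimately show ?thesis by simp
qed

theorem lemma2p1:
  fixes M :: "'a measure" and \<alpha> :: ereal and u v :: "'a \<Rightarrow> real" and f :: "real \<Rightarrow> real"
  assumes "sigma_finite_measure M" and "atomless M"
    and "0 < \<alpha>"
    and "u \<in> borel_measurable M" and "v \<in> borel_measurable M"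
    and "AE x in M. 0 \<le> u x" and "AE x in M. 0 \<le> v x"
    and "AE x in M. min (u x) (v x) = 0"
    and "f \<in> borel_measurable halfline" and "AE s in halfline. 0 \<le> f s"
    and "\<And>t. 0 \<le> t \<Longrightarrow> ereal t < \<alpha> \<Longrightarrow>
          (\<integral>\<^sup>+ s\<in>{0..t}. decr_rearr M u s \<partial>lborel) \<le> (\<integral>\<^sup>+ s\<in>{0..t}. decr_rearr halfline f s \<partial>lborel)"
    and "\<And>t. 0 \<le> t \<Longrightarrow> ereal t < \<alpha> \<Longrightarrow>
          (\<integral>\<^sup>+ s\<in>{0..t}. decr_rearr M v s \<partial>lborel) \<le> (\<integral>\<^sup>+ s\<in>{0..t}. decr_rearr halfline f s \<partial>lborel)"
  shows "\<forall>t. 0 \<le> t \<and> ereal t < \<alpha> \<longrightarrow>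
          (\<integral>\<^sup>+ s\<in>{0..t}. decr_rearr M (\<lambda>x. u x + v x) s \<partial>lborel)
            \<le> (\<integral>\<^sup>+ s\<in>{0..t}. decr_rearr halfline f (s / 2) \<partial>lborel)"
proof (intro allI impI, elim conjE)
  fix t :: real assume t: "0 \<le> t" and ta: "ereal t < \<alpha>"
  have um: "u \<in> borel_measurable M" and vm: "v \<in> borel_measurable M"
    and fm: "f \<in> borel_measurable halfline" using assms by auto
  have wm: "(\<lambda>x. u x + v x) \<in> borel_measurable M" using um vm by measurable
  have LC: "(\<integral>\<^sup>+ s\<in>{0..c}. decr_rearr N w s \<partial>lborel) = (\<integral>\<^sup>+ l\<in>{0..}. min (ennreal c) (distrib_fun N w l) \<partial>lborel)"
    if "w \<in> borel_measurable N" "0 \<le> c" for N :: "'b measure" and w c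
    using that by (intro layer_cake antimono_measurable distrib_antimono decr_iff) auto
  note [measurable] = antimono_measurable[OF distrib_antimono[OF um]]
    antimono_measurable[OF distrib_antimono[OF vm]] antimono_measurable[OF distrib_antimono[OF fm]]
  obtain a b where ab: "0 \<le> a" "0 \<le> b" "a + b = t"
    and pw: "\<And>l. 0 \<le> l \<Longrightarrow> min (ennreal t) (distrib_fun M u l + distrib_fun M v l)
       \<le> min (ennreal a) (distrib_fun M u l) + min (ennreal b) (distrib_fun M v l)"
    using choose_ab[OF t distrib_antimono[OF um] distrib_antimono[OF vm]
        distrib_rcont[OF um] distrib_rcont[OF vm]] by blast
  have "ereal a \<le> ereal t" "ereal b \<le> ereal t" using ab by auto
  then have aa: "ereal a < \<alpha>" "ereal b < \<alpha>" using ta by (meson le_less_trans)+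
  have "(\<integral>\<^sup>+ s\<in>{0..t}. decr_rearr M (\<lambda>x. u x + v x) s \<partial>lborel)
      = (\<integral>\<^sup>+ l\<in>{0..}. min (ennreal t) (distrib_fun M (\<lambda>x. u x + v x) l) \<partial>lborel)"
    by (rule LC[OF wm t])
  also have "\<dots> = (\<integral>\<^sup>+ l\<in>{0..}. min (ennreal t) (distrib_fun M u l + distrib_fun M v l) \<partial>lborel)"
    using distrib_add[OF um vm assms(6,7,8)] by (intro nn_integral_cong) (auto split: split_indicator)
  also have "\<dots> \<le> (\<integral>\<^sup>+ l\<in>{0..}. (min (ennreal a) (distrib_fun M u l) + min (ennreal b) (distrib_fun M v l)) \<partial>lborel)"
    using pw by (intro nn_integral_mono) (auto split: split_indicator)
  also have "\<dots> = (\<integral>\<^sup>+ l\<in>{0..}. min (ennreal a) (distrib_fun M u l) \<partial>lborel) + (\<integral>\<^sup>+ l\<in>{0..}. min (ennreal b) (distrib_fun M v l) \<partial>lborel)"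
    unfolding distrib_right by (rule nn_integral_add) measurable
  also have "\<dots> = (\<integral>\<^sup>+ s\<in>{0..a}. decr_rearr M u s \<partial>lborel) + (\<integral>\<^sup>+ s\<in>{0..b}. decr_rearr M v s \<partial>lborel)"
    using LC[OF um ab(1)] LC[OF vm ab(2)] by simp
  also have "\<dots> \<le> (\<integral>\<^sup>+ s\<in>{0..a}. decr_rearr halfline f s \<partial>lborel) + (\<integral>\<^sup>+ s\<in>{0..b}. decr_rearr halfline f s \<partial>lborel)"
    using assms(11)[OF ab(1) aa(1)] assms(12)[OF ab(2) aa(2)] by (rule add_mono)
  also have "\<dots> = (\<integral>\<^sup>+ l\<in>{0..}. min (ennreal a) (distrib_fun halfline f l) \<partial>lborel) + (\<integral>\<^sup>+ l\<in>{0..}. min (ennreal b) (distrib_fun halfline f l) \<partial>lborel)"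
    using LC[OF fm ab(1)] LC[OF fm ab(2)] by simp
  also have "\<dots> = (\<integral>\<^sup>+ l\<in>{0..}. (min (ennreal a) (distrib_fun halfline f l) + min (ennreal b) (distrib_fun halfline f l)) \<partial>lborel)"
    unfolding distrib_right by (rule nn_integral_add[symmetric]) measurable
  also have "\<dots> \<le> (\<integral>\<^sup>+ l\<in>{0..}. min (ennreal t) (2 * distrib_fun halfline f l) \<partial>lborel)"
    using min_concave[OF ab(1,2)] ab(3) by (intro nn_integral_mono) (auto split: split_indicator intro: mult_right_mono)
  also have "\<dots> = (\<integral>\<^sup>+ s\<in>{0..t}. decr_rearr halfline f (s / 2) \<partial>lborel)"
  proof (rule layer_cake[symmetric, OF t])
    show "(\<lambda>l. 2 * distrib_fun halfline f l) \<in> borel_measurable borel" by measurable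
    fix s l :: real assume "0 \<le> s" "s \<le> t" "0 \<le> l"
    then show "ennreal l < decr_rearr halfline f (s / 2) \<longleftrightarrow> ennreal s < 2 * distrib_fun halfline f l"
      using decr_iff[OF fm \<open>0 \<le> l\<close>, of "s / 2"] half_iff[OF \<open>0 \<le> s\<close>] by simp
  qed
  finally show "(\<integral>\<^sup>+ s\<in>{0..t}. decr_rearr M (\<lambda>x. u x + v x) s \<partial>lborel)
            \<le> (\<integral>\<^sup>+ s\<in>{0..t}. decr_rearr halfline f (s / 2) \<partial>lborel)" .
qed

end
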